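(* There is a positive absolute constant $k$ such that for every integer $c\ge 3$, $$G_c^{2/\varphi(c)}>k\,c.$$
   Context: For a positive integer $n$, $R(n)$ denotes the product of the distinct primes dividing $n$. $\varphi$ is Euler's totient function. For $c\ge3$, $G_c$ is the product of $R(abc)$ over all pairs of positive integers $(a,b)$ with $a+b=c$, $a<b$, $\gcd(a,b)=1$ (there are $\varphi(c)/2$ such pairs), so $G_c^{2/\varphi(c)}$ is the geometric mean of these radicals. *)

theory Defs
  imports "HOL-Number_Theory.Number_Theory"
begin

definition rad :: "nat \<Rightarrow> nat" where
  "rad n = (\<Prod>p\<in>prime_factors n. p)"

definition G :: "nat \<Rightarrow> nat" where
  "G c = (\<Prod>(a,b)\<in>{(a,b). 0 < a \<and> 0 < b \<and> a + b = c \<and> a < b \<and> coprime a b}. rad (a * b * c))"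

end

theory Submission
  imports Defs "HOL-Analysis.Analysis" "HOL-Real_Asymp.Real_Asymp"
begin


lemma rad_pos: "rad n > 0"
  unfolding rad_def by (auto intro!: prod_pos simp: prime_gt_0_nat in_prime_factors_iff)

lemma rad_dvd: assumes "n > 0" shows "rad n dvd n"
proof -
  have "rad n dvd (\<Prod>p\<in>prime_factors n. p ^ multiplicity p n)"
    unfolding rad_def
  proof (rule prod_dvd_prod)
    fix p assume "p \<in> prime_factors n"
    then have "multiplicity p n > 0"
      by (simp add: prime_factors_multiplicity)
    then show "p dvd p ^ multiplicity p n" by (simp add: dvd_power)
  qed
  also have "\<dots> = n" using assms by (simp add: prod_prime_factors)
  finally show ?thesis .
qed

lemma rad_le: "n > 0 \<Longrightarrow> rad n \<le> n"
  using rad_dvd dvd_imp_le by blast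

lemma rad_mult: assumes "coprime x y" "x > 0" "y > 0" shows "rad (x * y) = rad x * rad y"
proof -
  have d: "prime_factors x \<inter> prime_factors y = {}"
  proof (rule ccontr)
    assume "prime_factors x \<inter> prime_factors y \<noteq> {}"
    then obtain p where p: "p \<in> prime_factors x" "p \<in> prime_factors y" by blast
    then have "p dvd x" "p dvd y" "prime p" by (auto simp: in_prime_factors_iff)
    then show False using assms(1) by (metis coprime_common_divisor not_prime_unit)
  qed
  show ?thesis unfolding rad_def using assms
    by (simp add: prime_factors_product prod.union_disjoint d)
qed

definition D :: "nat \<Rightarrow> real" where "D x = ln (real x) - ln (real (rad x))"

lemma D_nonneg: "x > 0 \<Longrightarrow> D x \<ge> 0"
  unfolding D_def using rad_le[of x] rad_pos[of x] by simp

lemma D_formula: assumes "x > 0"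
  shows "D x = (\<Sum>p\<in>prime_factors x. (real (multiplicity p x) - 1) * ln (real p))"
proof -
  have e: "(\<Prod>p\<in>prime_factors x. p ^ multiplicity p x) = x"
    using prod_prime_factors[of x] assms by simp
  have "real (\<Prod>p\<in>prime_factors x. p ^ multiplicity p x) = (\<Prod>p\<in>prime_factors x. real p ^ multiplicity p x)"
    by simp
  then have "real x = (\<Prod>p\<in>prime_factors x. real p ^ multiplicity p x)"
    using e by simp
  then have "ln (real x) = (\<Sum>p\<in>prime_factors x. ln (real p ^ multiplicity p x))"
    by (simp only:) (rule ln_prod, auto simp: in_prime_factors_iff dest: prime_gt_0_nat)
  also have "\<dots> = (\<Sum>p\<in>prime_factors x. real (multiplicity p x) * ln (real p))"
    by (rule sum.cong[OF refl], rule ln_realpow)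
  finally have 1: "ln (real x) = (\<Sum>p\<in>prime_factors x. real (multiplicity p x) * ln (real p))" .
  have "real (rad x) = (\<Prod>p\<in>prime_factors x. real p)" unfolding rad_def by simp
  then have 2: "ln (real (rad x)) = (\<Sum>p\<in>prime_factors x. ln (real p))"
    by (simp only:) (rule ln_prod, auto simp: in_prime_factors_iff dest: prime_gt_0_nat)
  show ?thesis unfolding D_def 1 2 by (simp add: sum_subtractf algebra_simps)
qed

definition g :: "nat \<Rightarrow> real" where "g n = ln (real n) / (real n * (real n - 1))"

lemma g_nonneg: "g n \<ge> 0"
  unfolding g_def by (cases "n = 0") auto

lemma summ_g: "summable g"
  unfolding g_def
proof (rule summable_comparison_test_bigo)
  show "summable (\<lambda>n. norm (real n powr (-3/2)))"
    using summable_real_powr_iff[of "-3/2"] by simp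
  show "(\<lambda>n::nat. ln (real n) / (real n * (real n - 1))) \<in> O(\<lambda>n. real n powr (-3/2))"
    by real_asymp
qed

lemma geom_bound:
  fixes p :: nat assumes "p \<ge> 2"
  shows "(\<Sum>k\<in>{2..<c}. (1 / real p) ^ k) \<le> 1 / (real p * (real p - 1))"
proof (cases "c \<ge> 3")
  case True
  let ?x = "1 / real p"
  have x: "0 < ?x" "?x < 1" using assms by auto
  have "{2..<c} = {2..c-1}" using True by auto
  then have "(1 - ?x) * (\<Sum>k\<in>{2..<c}. ?x ^ k) = ?x ^ 2 - ?x ^ Suc (c - 1)"
    using True by (simp add: sum_gp_multiplied)
  also have "\<dots> \<le> ?x ^ 2" using x by simp
  finally have "(\<Sum>k\<in>{2..<c}. ?x ^ k) \<le> ?x ^ 2 / (1 - ?x)"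
    using x by (simp add: field_simps)
  also have "\<dots> = 1 / (real p * (real p - 1))"
    using assms by (simp add: field_simps power2_eq_square)
  finally show ?thesis .
next
  case False
  then have "{2..<c} \<subseteq> {2}" by auto
  then consider "{2..<c} = {}" | "{2..<c} = {2}" by blast
  then show ?thesis
  proof cases
    case 1 then show ?thesis using assms by simp
  next
    case 2 then show ?thesis using assms by (simp add: field_simps power2_eq_square)
  qed
qed

lemma card_multiples: assumes "d > 0"
  shows "real (card {x\<in>{1..<c}. d dvd x}) \<le> real c / real d"
proof -
  have "{x\<in>{1..<c}. d dvd x} \<subseteq> (\<lambda>j. d * j) ` {1..c div d}"
  proof
    fix x assume "x \<in> {x\<in>{1..<c}. d dvd x}"
    then obtain j where j: "x = d * j" "1 \<le> x" "x < c" by auto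
    then have "j \<ge> 1" by (cases j) auto
    moreover have "j \<le> c div d" using j assms
      by (metis div_le_mono less_or_eq_imp_le nonzero_mult_div_cancel_left not_gr0)
    ultimately show "x \<in> (\<lambda>j. d * j) ` {1..c div d}" using j by auto
  qed
  then have "card {x\<in>{1..<c}. d dvd x} \<le> card ((\<lambda>j. d * j) ` {1..c div d})"
    by (rule card_mono[rotated]) auto
  also have "\<dots> \<le> c div d" using card_image_le[of "{1..c div d}" "\<lambda>j. d * j"] by simp
  finally have "real (card {x\<in>{1..<c}. d dvd x}) \<le> real (c div d)" by simp
  also have "\<dots> \<le> real c / real d" by (simp add: of_nat_div_le_of_nat)
  finally show ?thesis .
qed


lemma D_pointwise:
  assumes x: "x \<in> {1..<c}"
  shows "D x \<le> (\<Sum>p\<in>{p. prime p \<and> p < c}. \<Sum>k\<in>{2..<c}. if p ^ k dvd x then ln (real p) else 0)"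
proof -
  have x0: "x > 0" "x < c" using x by auto
  have "D x = (\<Sum>p\<in>prime_factors x. (real (multiplicity p x) - 1) * ln (real p))"
    using D_formula x0 by blast
  also have "\<dots> \<le> (\<Sum>p\<in>prime_factors x. \<Sum>k\<in>{2..<c}. if p ^ k dvd x then ln (real p) else 0)"
  proof (rule sum_mono)
    fix p assume p: "p \<in> prime_factors x"
    then have pp: "prime p" "p dvd x" by (auto simp: in_prime_factors_iff)
    define m where "m = multiplicity p x"
    have m1: "m \<ge> 1" using p by (simp add: prime_factors_multiplicity m_def)
    have pm: "p ^ m dvd x" unfolding m_def by (rule multiplicity_dvd)
    have "m < 2 ^ m" by simp
    also have "\<dots> \<le> p ^ m" by (rule power_mono) (use prime_ge_2_nat[OF pp(1)] in auto)
    also have "\<dots> \<le> x" using dvd_imp_le[OF pm x0(1)] .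
    finally have mc: "m < c" using x0 by simp
    have sub: "{2..m} \<subseteq> {2..<c}" using mc by auto
    have "(real m - 1) * ln (real p) = (\<Sum>k\<in>{2..m}. ln (real p))"
      using m1 by (simp add: of_nat_diff)
    also have "\<dots> = (\<Sum>k\<in>{2..m}. if p ^ k dvd x then ln (real p) else 0)"
    proof (rule sum.cong)
      fix k assume "k \<in> {2..m}"
      then have "p ^ k dvd p ^ m" by (simp add: le_imp_power_dvd)
      then show "ln (real p) = (if p ^ k dvd x then ln (real p) else 0)"
        using pm dvd_trans by auto
    qed simp
    also have "\<dots> \<le> (\<Sum>k\<in>{2..<c}. if p ^ k dvd x then ln (real p) else 0)"
    proof (rule sum_mono2)
      have "ln (real p) \<ge> 0" using prime_ge_1_nat[OF pp(1)] by simp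
      then show "\<And>k. k \<in> {2..<c} - {2..m} \<Longrightarrow> 0 \<le> (if p ^ k dvd x then ln (real p) else 0)" by simp
    qed (use sub in auto)
    finally show "(real (multiplicity p x) - 1) * ln (real p) \<le> (\<Sum>k\<in>{2..<c}. if p ^ k dvd x then ln (real p) else 0)"
      unfolding m_def .
  qed
  also have "\<dots> \<le> (\<Sum>p\<in>{p. prime p \<and> p < c}. \<Sum>k\<in>{2..<c}. if p ^ k dvd x then ln (real p) else 0)"
  proof (rule sum_mono2)
    show "finite {p. prime p \<and> p < c}" by simp
    show "prime_factors x \<subseteq> {p. prime p \<and> p < c}"
    proof
      fix p assume "p \<in> prime_factors x"
      then have "prime p" "p dvd x" by (auto simp: in_prime_factors_iff)
      then show "p \<in> {p. prime p \<and> p < c}" using x0 dvd_imp_le[of p x] by simp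
    qed
    show "\<And>p. p \<in> {p. prime p \<and> p < c} - prime_factors x \<Longrightarrow>
         0 \<le> (\<Sum>k\<in>{2..<c}. if p ^ k dvd x then ln (real p) else 0)"
    proof -
      fix p assume "p \<in> {p. prime p \<and> p < c} - prime_factors x"
      then have "real p \<ge> 1" using prime_ge_1_nat by auto
      then have "ln (real p) \<ge> 0" by simp
      then show "0 \<le> (\<Sum>k\<in>{2..<c}. if p ^ k dvd x then ln (real p) else 0)"
        by (intro sum_nonneg) auto
    qed
  qed
  finally show ?thesis .
qed

lemma D_sum_bound: "(\<Sum>x\<in>{1..<c}. D x) \<le> suminf g * real c"
proof -
  let ?P = "{p. prime p \<and> p < c}"
  have "(\<Sum>x\<in>{1..<c}. D x) \<le> (\<Sum>x\<in>{1..<c}. \<Sum>p\<in>?P. \<Sum>k\<in>{2..<c}. if p ^ k dvd x then ln (real p) else 0)"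
    by (rule sum_mono) (rule D_pointwise)
  also have "\<dots> = (\<Sum>p\<in>?P. \<Sum>k\<in>{2..<c}. \<Sum>x\<in>{1..<c}. if p ^ k dvd x then ln (real p) else 0)"
    by (subst sum.swap, rule sum.cong[OF refl], rule sum.swap)
  also have "\<dots> \<le> (\<Sum>p\<in>?P. real c * g p)"
  proof (rule sum_mono)
    fix p assume p: "p \<in> ?P"
    then have p2: "p \<ge> 2" using prime_ge_2_nat by auto
    have "(\<Sum>k\<in>{2..<c}. \<Sum>x\<in>{1..<c}. if p ^ k dvd x then ln (real p) else 0)
        \<le> (\<Sum>k\<in>{2..<c}. ln (real p) * real c * (1 / real p) ^ k)"
    proof (rule sum_mono)
      fix k
      have "(\<Sum>x\<in>{1..<c}. if p ^ k dvd x then ln (real p) else 0)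
          = real (card {x\<in>{1..<c}. p ^ k dvd x}) * ln (real p)"
        by (simp add: sum.If_cases Int_def)
      also have "\<dots> \<le> (real c / real (p ^ k)) * ln (real p)"
        by (rule mult_right_mono) (use card_multiples[of "p ^ k" c] p2 in auto)
      also have "\<dots> = ln (real p) * real c * (1 / real p) ^ k"
        by (simp add: power_one_over field_simps)
      finally show "(\<Sum>x\<in>{1..<c}. if p ^ k dvd x then ln (real p) else 0)
          \<le> ln (real p) * real c * (1 / real p) ^ k" .
    qed
    also have "\<dots> = ln (real p) * real c * (\<Sum>k\<in>{2..<c}. (1 / real p) ^ k)"
      by (simp add: sum_distrib_left)
    also have "\<dots> \<le> ln (real p) * real c * (1 / (real p * (real p - 1)))"
      by (rule mult_left_mono) (use geom_bound[OF p2, of c] p2 in auto)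
    also have "\<dots> = real c * g p" by (simp add: g_def)
    finally show "(\<Sum>k\<in>{2..<c}. \<Sum>x\<in>{1..<c}. if p ^ k dvd x then ln (real p) else 0) \<le> real c * g p" .
  qed
  also have "\<dots> = real c * (\<Sum>p\<in>?P. g p)" by (simp add: sum_distrib_left)
  also have "\<dots> \<le> real c * (\<Sum>p\<in>{..<c}. g p)"
    by (rule mult_left_mono, rule sum_mono2) (auto simp: g_nonneg)
  also have "\<dots> \<le> real c * suminf g"
    by (rule mult_left_mono, rule sum_le_suminf) (auto simp: g_nonneg summ_g)
  finally show ?thesis by (simp add: mult.commute)
qed



lemma prime_set_bounds:
  "finite S \<Longrightarrow> \<forall>p\<in>S. prime (p::nat) \<Longrightarrow> card S = n \<Longrightarrow>
    (\<Prod>p\<in>S. 1 - 1 / real p) \<ge> 1 / (real n + 1) \<and> fact (n + 1) \<le> (\<Prod>p\<in>S. p)"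
proof (induction n arbitrary: S)
  case 0
  then show ?case by simp
next
  case (Suc n)
  then have ne: "S \<noteq> {}" by auto
  define q where "q = Max S"
  have qS: "q \<in> S" using Suc.prems ne q_def by simp
  have sub: "S \<subseteq> {2..q}" using Suc.prems q_def prime_ge_2_nat by auto
  have "Suc n \<le> card {2..q}" using card_mono[OF _ sub] Suc.prems by simp
  then have qn: "q \<ge> n + 2" by simp
  have q0: "real q > 0" using qn by simp
  define S' where "S' = S - {q}"
  have IH: "(\<Prod>p\<in>S'. 1 - 1 / real p) \<ge> 1 / (real n + 1) \<and> fact (n + 1) \<le> (\<Prod>p\<in>S'. p)"
    using Suc.IH[of S'] Suc.prems qS unfolding S'_def by auto
  have e1: "(\<Prod>p\<in>S. 1 - 1 / real p) = (1 - 1 / real q) * (\<Prod>p\<in>S'. 1 - 1 / real p)"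
    unfolding S'_def using Suc.prems qS by (simp add: prod.remove)
  have e2: "(\<Prod>p\<in>S. p) = q * (\<Prod>p\<in>S'. p)"
    unfolding S'_def using Suc.prems qS by (simp add: prod.remove)
  have a: "1 - 1 / real q \<ge> (real n + 1) / (real n + 2)"
    using qn q0 by (simp add: field_simps)
  have b: "(real n + 1) / (real n + 2) \<ge> 0" by simp
  have b2: "1 / real q \<le> 1" using qn by simp
  have "(1 - 1 / real q) * (\<Prod>p\<in>S'. 1 - 1 / real p) \<ge> (real n + 1) / (real n + 2) * (1 / (real n + 1))"
    by (rule mult_mono) (use a IH b2 in auto)
  also have "(real n + 1) / (real n + 2) * (1 / (real n + 1)) = 1 / (real (Suc n) + 1)"
    by (simp add: field_simps)
  finally have c1: "(\<Prod>p\<in>S. 1 - 1 / real p) \<ge> 1 / (real (Suc n) + 1)" using e1 by simp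
  have "fact (Suc n + 1) = (n + 2) * (fact (n + 1) :: nat)" by simp
  also have "\<dots> \<le> q * (\<Prod>p\<in>S'. p)" by (rule mult_mono) (use qn IH in auto)
  finally show ?case using c1 e2 by simp
qed

lemma fact_ge_pow: "(M::nat) ^ (n - M) \<le> fact n"
proof (induction n)
  case 0 then show ?case by simp
next
  case (Suc n)
  show ?case
  proof (cases "Suc n \<le> M")
    case True
    then have "Suc n - M = 0" by simp
    then show ?thesis using fact_ge_1[of "Suc n", where 'a=nat] by (metis power_0)
  next
    case False
    then have "Suc n - M = Suc (n - M)" by simp
    then have "M ^ (Suc n - M) = M * M ^ (n - M)" by simp
    also have "\<dots> \<le> Suc n * fact n" by (rule mult_mono) (use False Suc.IH in auto)
    finally show ?thesis by simp
  qed
qed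

lemma rad_nz: "rad n \<noteq> 0"
  using rad_pos[of n] by simp

lemma main_ineq:
  fixes c M :: nat
  assumes c3: "c \<ge> 3" and M0: "M > 0" and lnM: "ln (real M) \<ge> 2 * suminf g"
  shows "2 / real (totient c) * ln (real (G c)) \<ge> ln (real c / 2) - 2 * suminf g * real M"
proof -
  define K where "K = suminf g"
  have K0: "K \<ge> 0" unfolding K_def by (rule suminf_nonneg[OF summ_g g_nonneg])
  define P where "P = {(a,b). 0 < a \<and> 0 < b \<and> a + b = c \<and> a < b \<and> coprime a b}"
  define r where "r = rad c"
  define w where "w = card (prime_factors c)"
  have r1: "real r \<ge> 1" using rad_pos[of c] unfolding r_def by linarith
  have finP: "finite P"
    by (rule finite_subset[of _ "{..c} \<times> {..c}"]) (auto simp: P_def)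
  have Gdef: "G c = (\<Prod>x\<in>P. rad (fst x * snd x * c))" unfolding G_def P_def by (simp add: case_prod_beta)
  have Pmem: "0 < fst x \<and> 0 < snd x \<and> fst x + snd x = c \<and> fst x < snd x \<and> coprime (fst x) (snd x)" if "x \<in> P" for x
    using that unfolding P_def by auto
  have radeq: "rad (fst x * snd x * c) = rad (fst x) * rad (snd x) * r" if "x \<in> P" for x
  proof -
    obtain a b where ab: "x = (a, b)" by (cases x)
    have h: "0 < a" "0 < b" "a + b = c" "coprime a b" using Pmem[OF that] ab by auto
    have g1: "gcd a c = gcd a b" unfolding h(3)[symmetric] by (rule gcd_add2)
    have g2: "gcd c b = gcd a b" unfolding h(3)[symmetric] by (rule gcd_add1)
    have g0: "gcd a b = 1" using h(4) by (simp only: coprime_iff_gcd_eq_1)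
    have "coprime a c" using g1 g0 by (simp only: coprime_iff_gcd_eq_1)
    moreover have "coprime c b" using g2 g0 by (simp only: coprime_iff_gcd_eq_1)
    then have "coprime b c" by (rule coprime_commute[THEN iffD1])
    ultimately have "coprime (a * b) c" by simp
    then have "rad (a * b * c) = rad (a * b) * rad c" by (rule rad_mult) (use h in auto)
    also have "rad (a * b) = rad a * rad b" by (rule rad_mult) (use h in auto)
    finally show ?thesis unfolding r_def ab by simp
  qed
  have "real (G c) = (\<Prod>x\<in>P. real (rad (fst x * snd x * c)))"
    unfolding Gdef by simp
  then have "ln (real (G c)) = (\<Sum>x\<in>P. ln (real (rad (fst x * snd x * c))))"
    by (simp only:) (rule ln_prod[OF finP], simp add: rad_nz)
  also have "\<dots> = (\<Sum>x\<in>P. ln (real (rad (fst x))) + ln (real (rad (snd x))) + ln (real r))"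
  proof (rule sum.cong[OF refl])
    fix x assume x: "x \<in> P"
    have "real (rad (fst x * snd x * c)) = real (rad (fst x)) * real (rad (snd x)) * real r" using radeq[OF x] by simp
    then show "ln (real (rad (fst x * snd x * c))) = ln (real (rad (fst x))) + ln (real (rad (snd x))) + ln (real r)"
      using rad_pos[of "fst x"] rad_pos[of "snd x"] r1 by (simp add: ln_mult)
  qed
  finally have lnG: "ln (real (G c)) = (\<Sum>x\<in>P. ln (real (rad (fst x))) + ln (real (rad (snd x))) + ln (real r))" .
  define L where "L = ln (real c / 2) + ln (real r)"
  have L0: "L \<ge> 0" unfolding L_def using c3 r1 by simp
  have trm: "ln (real (rad (fst x))) + ln (real (rad (snd x))) + ln (real r) \<ge> L - (D (fst x) + D (snd x))" if "x \<in> P" for x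
  proof -
    have h: "0 < fst x" "0 < snd x" "fst x + snd x = c" "fst x < snd x" using Pmem[OF that] by auto
    have "ln (real (fst x)) \<ge> 0" using h by simp
    moreover have "real c / 2 \<le> real (snd x)" using h by linarith
    then have "ln (real (snd x)) \<ge> ln (real c / 2)"
      using c3 by (subst ln_le_cancel_iff) auto
    ultimately show ?thesis unfolding D_def L_def by simp
  qed
  have "(\<Sum>x\<in>P. L - (D (fst x) + D (snd x))) \<le> ln (real (G c))"
    unfolding lnG by (rule sum_mono) (rule trm)
  moreover have "(\<Sum>x\<in>P. L - (D (fst x) + D (snd x))) = real (card P) * L - (\<Sum>x\<in>P. D (fst x) + D (snd x))"
    by (simp add: sum_subtractf)
  ultimately have lnG2: "ln (real (G c)) \<ge> real (card P) * L - (\<Sum>x\<in>P. D (fst x) + D (snd x))" by simp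
  have injf: "inj_on fst P"
  proof (rule inj_onI)
    fix x y assume "x \<in> P" "y \<in> P" "fst x = fst y"
    then show "x = y" using Pmem[of x] Pmem[of y] by (simp add: prod_eq_iff)
  qed
  have injs: "inj_on snd P"
  proof (rule inj_onI)
    fix x y assume "x \<in> P" "y \<in> P" "snd x = snd y"
    then show "x = y" using Pmem[of x] Pmem[of y] by (simp add: prod_eq_iff)
  qed
  have disj: "fst ` P \<inter> snd ` P = {}"
  proof (rule ccontr)
    assume "fst ` P \<inter> snd ` P \<noteq> {}"
    then obtain x y where "x \<in> P" "y \<in> P" "fst x = snd y" by blast
    then show False using Pmem[of x] Pmem[of y] by linarith
  qed
  have subU: "fst ` P \<union> snd ` P \<subseteq> {1..<c}"
  proof
    fix z assume "z \<in> fst ` P \<union> snd ` P"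
    then obtain x where "x \<in> P" "z = fst x \<or> z = snd x" by blast
    then show "z \<in> {1..<c}" using Pmem[of x] by auto
  qed
  have "(\<Sum>x\<in>P. D (fst x) + D (snd x)) = (\<Sum>x\<in>P. D (fst x)) + (\<Sum>x\<in>P. D (snd x))"
    by (simp add: sum.distrib)
  also have "\<dots> = (\<Sum>x\<in>fst ` P. D x) + (\<Sum>x\<in>snd ` P. D x)"
    by (simp add: sum.reindex[OF injf] sum.reindex[OF injs])
  also have "\<dots> = (\<Sum>x\<in>fst ` P \<union> snd ` P. D x)"
    by (rule sum.union_disjoint[symmetric]) (use finP disj in auto)
  also have "\<dots> \<le> (\<Sum>x\<in>{1..<c}. D x)"
    by (rule sum_mono2) (use subU D_nonneg in auto)
  also have "\<dots> \<le> K * real c" unfolding K_def by (rule D_sum_bound)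
  finally have sumD: "(\<Sum>x\<in>P. D (fst x) + D (snd x)) \<le> K * real c" .
  have tot_sub: "totatives c \<subseteq> fst ` P \<union> snd ` P"
  proof
    fix x assume "x \<in> totatives c"
    then have x: "0 < x" "x \<le> c" "coprime x c" by (auto simp: in_totatives_iff)
    have gxc: "gcd x c = 1" using x(3) by (simp only: coprime_iff_gcd_eq_1)
    have "x \<noteq> c"
    proof
      assume "x = c" then have "gcd x c = c" by simp
      then show False using gxc c3 by simp
    qed
    then have xc: "x < c" using x by simp
    have "gcd (c - x) x = gcd c x" using xc by (simp add: gcd_diff1_nat)
    also have "gcd c x = 1" using gxc by (simp only: gcd.commute)
    finally have "coprime (c - x) x" by (simp only: coprime_iff_gcd_eq_1)
    then have cx: "coprime x (c - x)" by (rule coprime_commute[THEN iffD1])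
    have "2 * x \<noteq> c"
    proof
      assume "2 * x = c"
      then have "x dvd c" by auto
      then have "gcd x c = x" by (rule gcd_proj1_if_dvd_nat)
      then have "x = 1" using gxc by simp
      then show False using \<open>2 * x = c\<close> c3 by simp
    qed
    then consider "2 * x < c" | "2 * x > c" by linarith
    then show "x \<in> fst ` P \<union> snd ` P"
    proof cases
      case 1
      then have "(x, c - x) \<in> P" using x xc cx unfolding P_def by auto
      then show ?thesis by force
    next
      case 2
      have "coprime (c - x) x" using cx by (rule coprime_commute[THEN iffD1])
      then have "(c - x, x) \<in> P" using 2 x xc unfolding P_def by auto
      then show ?thesis by force
    qed
  qed
  have "totient c \<le> card (fst ` P \<union> snd ` P)"
    unfolding totient_def by (rule card_mono) (use finP tot_sub in auto)
  also have "\<dots> \<le> card (fst ` P) + card (snd ` P)" by (rule card_Un_le)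
  also have "\<dots> \<le> 2 * card P" using card_image_le[OF finP, of fst] card_image_le[OF finP, of snd] by simp
  finally have cardP: "real (totient c) \<le> 2 * real (card P)" by linarith
  have phi0: "real (totient c) > 0" using c3 by simp
  have pfin: "finite (prime_factors c)" "\<forall>p\<in>prime_factors c. prime p" by auto
  note PB = prime_set_bounds[OF pfin refl]
  have "real (totient c) = real c * (\<Prod>p\<in>prime_factors c. 1 - 1 / real p)" by (rule totient_formula2)
  also have "\<dots> \<ge> real c * (1 / (real w + 1))"
    by (rule mult_left_mono) (use PB in \<open>auto simp: w_def\<close>)
  finally have "real c \<le> (real w + 1) * real (totient c)" by (simp add: field_simps)
  note phiw = this
  have "fact (w + 1) \<le> r" using PB unfolding r_def rad_def w_def by simp
  then have "M ^ (w + 1 - M) \<le> r" using fact_ge_pow[of M "w + 1"] by linarith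
  then have "real (M ^ (w + 1 - M)) \<le> real r" by (simp only: of_nat_le_iff)
  then have "real M ^ (w + 1 - M) \<le> real r" by (simp only: of_nat_power)
  moreover note M0
  ultimately have "ln (real M ^ (w + 1 - M)) \<le> ln (real r)" using r1 by (subst ln_le_cancel_iff) auto
  then have "real (w + 1 - M) * ln (real M) \<le> ln (real r)" using M0 by (simp add: ln_realpow)
  moreover have "real (w + 1 - M) * ln (real M) \<ge> real (w + 1 - M) * (2 * K)"
    by (rule mult_left_mono) (use lnM in \<open>auto simp: K_def\<close>)
  moreover have "real (w + 1 - M) * (2 * K) \<ge> (real w + 1 - real M) * (2 * K)"
    by (rule mult_right_mono) (use K0 in auto)
  moreover have "(real w + 1 - real M) * (2 * K) = 2 * K * (real w + 1) - 2 * K * real M"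
    by (simp add: algebra_simps)
  ultimately have lnr: "ln (real r) \<ge> 2 * K * (real w + 1) - 2 * K * real M"
    by linarith
  define \<phi> where "\<phi> = real (totient c)"
  have "2 * ln (real (G c)) \<ge> 2 * real (card P) * L - 2 * K * real c"
    using lnG2 sumD by linarith
  moreover have "2 * real (card P) * L \<ge> \<phi> * L"
    by (rule mult_right_mono) (use cardP L0 in \<open>auto simp: \<phi>_def\<close>)
  moreover have "2 * K * real c \<le> 2 * K * (real w + 1) * \<phi>"
    using mult_left_mono[OF phiw, of "2 * K"] K0 by (simp add: \<phi>_def mult.assoc)
  moreover have "\<phi> * (L - 2 * K * (real w + 1)) = \<phi> * L - 2 * K * (real w + 1) * \<phi>"
    by (simp add: algebra_simps)
  ultimately have "2 * ln (real (G c)) \<ge> \<phi> * (L - 2 * K * (real w + 1))"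
    by linarith
  moreover have "L - 2 * K * (real w + 1) \<ge> ln (real c / 2) - 2 * K * real M"
    using lnr unfolding L_def by linarith
  moreover have "\<phi> * (L - 2 * K * (real w + 1)) \<ge> \<phi> * (ln (real c / 2) - 2 * K * real M)"
    by (rule mult_left_mono) (use calculation phi0 in \<open>auto simp: \<phi>_def\<close>)
  ultimately have "2 * ln (real (G c)) \<ge> \<phi> * (ln (real c / 2) - 2 * K * real M)"
    by linarith
  then show ?thesis using phi0 unfolding \<phi>_def K_def
    by (simp add: field_simps)
qed

theorem theorem3:
  shows "\<exists>k::real. k > 0 \<and> (\<forall>c::nat. c \<ge> 3 \<longrightarrow>
           real (G c) powr (2 / real (totient c)) > k * real c)"
proof -
  define K where "K = suminf g"
  define M :: nat where "M = nat \<lceil>exp (2 * K)\<rceil> + 1"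
  have "real M \<ge> exp (2 * K)" unfolding M_def by linarith
  then have lnM: "ln (real M) \<ge> 2 * K"
  proof -
    have "0 < real M" using \<open>real M \<ge> exp (2 * K)\<close> exp_gt_zero[of "2 * K"] by linarith
    then have "ln (exp (2 * K)) \<le> ln (real M)"
      using \<open>real M \<ge> exp (2 * K)\<close> by (subst ln_le_cancel_iff) auto
    then show ?thesis by simp
  qed
  have M0: "M > 0" unfolding M_def by simp
  define \<beta> where "\<beta> = 2 * K * real M"
  define k where "k = exp (- \<beta>) / 4"
  show ?thesis
  proof (intro exI conjI allI impI)
    show "k > 0" unfolding k_def by simp
    fix c :: nat assume c3: "c \<ge> 3"
    have ineq: "2 / real (totient c) * ln (real (G c)) \<ge> ln (real c / 2) - \<beta>"
      using main_ineq[OF c3 M0 lnM[unfolded K_def]] unfolding \<beta>_def K_def by simp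
    have G0: "G c > 0" unfolding G_def using rad_pos by (auto intro!: prod_pos simp: case_prod_beta)
    have "real (G c) powr (2 / real (totient c)) = exp (2 / real (totient c) * ln (real (G c)))"
      using G0 by (simp add: powr_def)
    also have "\<dots> \<ge> exp (ln (real c / 2) - \<beta>)" using ineq by simp
    also have "exp (ln (real c / 2) - \<beta>) = real c / 2 * exp (- \<beta>)"
      using c3 by (simp add: exp_diff exp_minus field_simps)
    finally have "real (G c) powr (2 / real (totient c)) \<ge> real c / 2 * exp (- \<beta>)" .
    moreover have "real c / 2 * exp (- \<beta>) > k * real c" unfolding k_def using c3 by simp
    ultimately show "real (G c) powr (2 / real (totient c)) > k * real c" by linarith
  qed
qed

end
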